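(* If $H$ is a butterfly minor of a digraph $D$, then $\operatorname{dbw}(H)\le\operatorname{dbw}(D)$.
   Context: All digraphs are finite and loopless. An edge $\vec{xy}$ of $D$ is a butterfly edge if $x$ has out-degree $1$ and $y$ has in-degree $1$. Contracting $\vec{xy}$ removes $\vec{xy}$, $x$, $y$ and adds a new vertex with in-neighbourhood $(N^-(x)\cup N^-(y))\setminus\{x,y\}$ and out-neighbourhood $(N^+(x)\cup N^+(y))\setminus\{x,y\}$. $H$ is a butterfly minor of $D$ if it is obtained from a subgraph of $D$ by a sequence of contractions of butterfly edges. Directed branch-width: for $X\subseteq E(D)$, $S^V_X=\{y: \exists x,z,\ \vec{xy}\in E(D)\setminus X,\ \vec{yz}\in X\}$; $\operatorname{dbw}(D)$ is the minimum over $(T,\beta)$ ($T$ a tree of maximum degree at most three, $\beta$ a bijection from leaves onto $E(D)$) of the maximum over tree edges of $|S^V_{\beta(Y)}\cup S^V_{E(D)\setminus\beta(Y)}|$, $Y$ the leaves on one side (0 if no tree edges). *)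

theory Defs
  imports Main
begin

type_synonym 'a digraph = "'a set \<times> ('a \<times> 'a) set"

definition digraph :: "'a digraph \<Rightarrow> bool" where
  "digraph D \<longleftrightarrow> finite (fst D) \<and> snd D \<subseteq> fst D \<times> fst D \<and> (\<forall>v. (v, v) \<notin> snd D)"

definition in_nbrs :: "'a digraph \<Rightarrow> 'a \<Rightarrow> 'a set" where
  "in_nbrs D v = {u. (u, v) \<in> snd D}"

definition out_nbrs :: "'a digraph \<Rightarrow> 'a \<Rightarrow> 'a set" where
  "out_nbrs D v = {w. (v, w) \<in> snd D}"

definition butterfly_edge :: "'a digraph \<Rightarrow> 'a \<Rightarrow> 'a \<Rightarrow> bool" where
  "butterfly_edge D x y \<longleftrightarrow> (x, y) \<in> snd D \<and> card (out_nbrs D x) = 1 \<and> card (in_nbrs D y) = 1"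

text \<open>Contraction of the arc xy; the new vertex is given the name z, which must be
  fresh, i.e. not among the remaining vertices (z may reuse the name x or y).\<close>

definition contract :: "'a digraph \<Rightarrow> 'a \<Rightarrow> 'a \<Rightarrow> 'a \<Rightarrow> 'a digraph" where
  "contract D x y z =
     ((fst D - {x, y}) \<union> {z},
      {(u, v). (u, v) \<in> snd D \<and> u \<notin> {x, y} \<and> v \<notin> {x, y}}
      \<union> {(u, z) | u. u \<in> (in_nbrs D x \<union> in_nbrs D y) - {x, y}}
      \<union> {(z, w) | w. w \<in> (out_nbrs D x \<union> out_nbrs D y) - {x, y}})"

definition subdigraph :: "'a digraph \<Rightarrow> 'a digraph \<Rightarrow> bool" where
  "subdigraph H D \<longleftrightarrow> fst H \<subseteq> fst D \<and> snd H \<subseteq> snd D \<and> snd H \<subseteq> fst H \<times> fst H"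

inductive bminor_seq :: "'a digraph \<Rightarrow> 'a digraph \<Rightarrow> bool" where
  sub: "subdigraph H D \<Longrightarrow> bminor_seq H D"
| contr: "bminor_seq H D \<Longrightarrow> butterfly_edge H x y \<Longrightarrow> z \<notin> fst H - {x, y}
           \<Longrightarrow> bminor_seq (contract H x y z) D"

definition digraph_iso :: "'a digraph \<Rightarrow> 'b digraph \<Rightarrow> bool" where
  "digraph_iso D H \<longleftrightarrow> (\<exists>f. bij_betw f (fst D) (fst H) \<and>
      snd H = (\<lambda>(u, v). (f u, f v)) ` snd D)"

definition butterfly_minor :: "'b digraph \<Rightarrow> 'a digraph \<Rightarrow> bool" where
  "butterfly_minor H D \<longleftrightarrow> (\<exists>D'. bminor_seq D' D \<and> digraph_iso D' H)"

definition tree_adj :: "nat set set \<Rightarrow> (nat \<times> nat) set" where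
  "tree_adj F = {(u, v). {u, v} \<in> F}"

definition utree :: "nat set \<Rightarrow> nat set set \<Rightarrow> bool" where
  "utree N F \<longleftrightarrow> finite N \<and> N \<noteq> {}
     \<and> F \<subseteq> {{u, v} | u v. u \<in> N \<and> v \<in> N \<and> u \<noteq> v}
     \<and> (\<forall>u\<in>N. \<forall>v\<in>N. (u, v) \<in> (tree_adj F)\<^sup>*)
     \<and> (\<forall>u v. {u, v} \<in> F \<longrightarrow> (u, v) \<notin> (tree_adj (F - {{u, v}}))\<^sup>*)"

definition tdegree :: "nat set set \<Rightarrow> nat \<Rightarrow> nat" where
  "tdegree F v = card {e \<in> F. v \<in> e}"

definition tleaves :: "nat set \<Rightarrow> nat set set \<Rightarrow> nat set" where
  "tleaves N F = {v \<in> N. tdegree F v \<le> 1}"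

definition side_leaves :: "nat set \<Rightarrow> nat set set \<Rightarrow> nat \<Rightarrow> nat \<Rightarrow> nat set" where
  "side_leaves N F a b = {l \<in> tleaves N F. (a, l) \<in> (tree_adj (F - {{a, b}}))\<^sup>*}"

definition SV :: "('a \<times> 'a) set \<Rightarrow> ('a \<times> 'a) set \<Rightarrow> 'a set" where
  "SV E X = {y. \<exists>x z. (x, y) \<in> E - X \<and> (y, z) \<in> X}"

definition dbw_width :: "('a \<times> 'a) set \<Rightarrow> ('a \<times> 'a) set \<Rightarrow> nat" where
  "dbw_width E X = card (SV E X \<union> SV E (E - X))"

definition branch_decomp :: "'a digraph \<Rightarrow> nat set \<Rightarrow> nat set set \<Rightarrow> (nat \<Rightarrow> 'a \<times> 'a) \<Rightarrow> bool" where
  "branch_decomp D N F \<beta> \<longleftrightarrow> utree N F \<and> (\<forall>v\<in>N. tdegree F v \<le> 3)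
      \<and> bij_betw \<beta> (tleaves N F) (snd D)"

definition decomp_width :: "'a digraph \<Rightarrow> nat set \<Rightarrow> nat set set \<Rightarrow> (nat \<Rightarrow> 'a \<times> 'a) \<Rightarrow> nat" where
  "decomp_width D N F \<beta> =
     Max ({0} \<union> {dbw_width (snd D) (\<beta> ` side_leaves N F a b) | a b. {a, b} \<in> F})"

definition dbw :: "'a digraph \<Rightarrow> nat" where
  "dbw D = (if snd D = {} then 0
            else Inf {decomp_width D N F \<beta> | N F \<beta>. branch_decomp D N F \<beta>})"

end

theory Submission
  imports Defs
begin


lemma adj_sym: "(u,v) \<in> tree_adj G \<Longrightarrow> (v,u) \<in> tree_adj G"
  by (simp add: tree_adj_def insert_commute)

lemma rtr_sym: "(u,v) \<in> (tree_adj G)\<^sup>* \<Longrightarrow> (v,u) \<in> (tree_adj G)\<^sup>*"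
proof (induction rule: rtrancl_induct)
  case base then show ?case by simp
next
  case (step y z)
  then show ?case by (meson adj_sym converse_rtrancl_into_rtrancl)
qed

lemma adj_mono: "G \<subseteq> G' \<Longrightarrow> (u,v) \<in> (tree_adj G)\<^sup>* \<Longrightarrow> (u,v) \<in> (tree_adj G')\<^sup>*"
proof -
  assume "G \<subseteq> G'"
  then have "tree_adj G \<subseteq> tree_adj G'" by (auto simp: tree_adj_def)
  then show "(u,v) \<in> (tree_adj G)\<^sup>* \<Longrightarrow> (u,v) \<in> (tree_adj G')\<^sup>*" using rtrancl_mono by blast
qed

lemma isolated: "(u,v) \<in> (tree_adj G)\<^sup>* \<Longrightarrow> \<forall>e\<in>G. u \<notin> e \<Longrightarrow> v = u"
  by (erule converse_rtranclE) (auto simp: tree_adj_def)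

lemma T1: "(a,v) \<in> (tree_adj G)\<^sup>* \<Longrightarrow> {a,b} \<in> G \<Longrightarrow>
   (a,v) \<in> (tree_adj (G - {{a,b}}))\<^sup>* \<or> (b,v) \<in> (tree_adj (G - {{a,b}}))\<^sup>*"
proof (induction rule: rtrancl_induct)
  case base then show ?case by simp
next
  case (step u w)
  show ?case
  proof (cases "{u,w} = {a,b}")
    case True
    have "w \<in> {u,w}" by simp
    then have "w = a \<or> w = b" using True by simp
    then show ?thesis by auto
  next
    case False
    then have "(u,w) \<in> tree_adj (G - {{a,b}})" using step(2) by (auto simp: tree_adj_def)
    then show ?thesis using step by (meson rtrancl.rtrancl_into_rtrancl)
  qed
qed

lemma utreeD:
  assumes "utree N F"
  shows "finite N" "N \<noteq> {}" "F \<subseteq> {{u, v} | u v. u \<in> N \<and> v \<in> N \<and> u \<noteq> v}"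
    "\<And>u v. u\<in>N \<Longrightarrow> v\<in>N \<Longrightarrow> (u, v) \<in> (tree_adj F)\<^sup>*"
    "\<And>u v. {u, v} \<in> F \<Longrightarrow> (u, v) \<notin> (tree_adj (F - {{u, v}}))\<^sup>*"
  using assms unfolding utree_def by auto

lemma utree_finF: "utree N F \<Longrightarrow> finite F"
proof -
  assume u: "utree N F"
  have "F \<subseteq> Pow N" using utreeD(3)[OF u] by auto
  then show ?thesis using utreeD(1)[OF u] by (meson finite_Pow_iff rev_finite_subset)
qed

lemma utree_edge: "utree N F \<Longrightarrow> {a,b} \<in> F \<Longrightarrow> a \<in> N \<and> b \<in> N \<and> a \<noteq> b"
proof -
  assume u: "utree N F" and e: "{a,b} \<in> F"
  then obtain s t where "{a,b} = {s,t}" "s\<in>N" "t\<in>N" "s\<noteq>t" using utreeD(3)[OF u] by blast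
  then show ?thesis by (metis doubleton_eq_iff)
qed

lemma sides_disj:
  assumes u: "utree N F" and e: "{a,b} \<in> F"
    and "(a,l) \<in> (tree_adj (F - {{a,b}}))\<^sup>*" "(b,l) \<in> (tree_adj (F - {{a,b}}))\<^sup>*"
  shows False
proof -
  have "(a,b) \<in> (tree_adj (F - {{a,b}}))\<^sup>*" using assms(3) rtr_sym[OF assms(4)] by (meson rtrancl_trans)
  then show False using utreeD(5)[OF u e] by blast
qed

lemma tdegree_mono: "F' \<subseteq> F \<Longrightarrow> finite F \<Longrightarrow> tdegree F' x \<le> tdegree F x"
  unfolding tdegree_def by (rule card_mono) auto




lemma remove_leaf:
  assumes u: "utree N F" and uN: "u \<in> N" and du: "tdegree F u \<le> 1" and vN: "v \<in> N" "v \<noteq> u"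
  defines "N' \<equiv> N - {u}" and "F' \<equiv> {e\<in>F. u \<notin> e}"
  shows "utree N' F'"
    "\<And>a b l. {a,b} \<in> F' \<Longrightarrow> l \<in> N' \<Longrightarrow>
        (a,l) \<in> (tree_adj (F' - {{a,b}}))\<^sup>* \<longleftrightarrow> (a,l) \<in> (tree_adj (F - {{a,b}}))\<^sup>*"
proof -
  have finF: "finite F" using utree_finF[OF u] .
  have "tdegree F u \<noteq> 0"
  proof
    assume "tdegree F u = 0"
    then have "{e\<in>F. u\<in>e} = {}" using finF unfolding tdegree_def by simp
    then have "v = u" using isolated[OF utreeD(4)[OF u uN vN(1)]] by auto
    then show False using vN by simp
  qed
  then have "card {e\<in>F. u\<in>e} = 1" using du unfolding tdegree_def by simp
  then obtain e0 where e0: "{e\<in>F. u\<in>e} = {e0}" by (meson card_1_singletonE)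
  then have "e0 \<in> F" "u \<in> e0" by auto
  then obtain s t where st: "e0 = {s,t}" "s\<in>N" "t\<in>N" "s\<noteq>t" using utreeD(3)[OF u] by blast
  then obtain p where p: "e0 = {u,p}" "p \<in> N" "p \<noteq> u" using \<open>u\<in>e0\<close> by (metis insert_commute insert_iff singletonD)
  have F'eq: "F' = F - {{p,u}}" unfolding F'_def using e0 p by (auto simp: insert_commute)
  have puF: "{p,u} \<in> F" using \<open>e0\<in>F\<close> p by (simp add: insert_commute)
  have isoF': "\<forall>e\<in>F'. u \<notin> e" unfolding F'_def by auto
  have reach: "(p,w) \<in> (tree_adj F')\<^sup>*" if "w \<in> N'" for w
  proof -
    have "(p,w) \<in> (tree_adj F)\<^sup>*" using utreeD(4)[OF u p(2)] that unfolding N'_def by auto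
    from T1[OF this puF] have "(p,w) \<in> (tree_adj F')\<^sup>* \<or> (u,w) \<in> (tree_adj F')\<^sup>*"
      unfolding F'eq .
    then show ?thesis using isolated[OF _ isoF'] that unfolding N'_def by auto
  qed
  have conn: "(x,y) \<in> (tree_adj F')\<^sup>*" if "x \<in> N'" "y \<in> N'" for x y
    using reach[OF that(1)] reach[OF that(2)] by (meson rtr_sym rtrancl_trans)
  have shape: "F' \<subseteq> {{a, b} | a b. a \<in> N' \<and> b \<in> N' \<and> a \<noteq> b}"
  proof
    fix e assume "e \<in> F'"
    then have "e \<in> F" "u \<notin> e" unfolding F'_def by auto
    then obtain a b where "e = {a,b}" "a\<in>N" "b\<in>N" "a\<noteq>b" using utreeD(3)[OF u] by blast
    then show "e \<in> {{a, b} | a b. a \<in> N' \<and> b \<in> N' \<and> a \<noteq> b}" using \<open>u\<notin>e\<close> unfolding N'_def by auto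
  qed
  have acyc: "(a, b) \<notin> (tree_adj (F' - {{a, b}}))\<^sup>*" if "{a,b} \<in> F'" for a b
  proof
    assume "(a, b) \<in> (tree_adj (F' - {{a, b}}))\<^sup>*"
    then have "(a, b) \<in> (tree_adj (F - {{a, b}}))\<^sup>*" by (rule adj_mono[rotated]) (auto simp: F'_def)
    then show False using utreeD(5)[OF u, of a b] that unfolding F'_def by auto
  qed
  show ut': "utree N' F'" unfolding utree_def
    using utreeD(1)[OF u] vN shape conn acyc unfolding N'_def by auto
  fix a b l assume ab: "{a,b} \<in> F'" and l: "l \<in> N'"
  show "(a,l) \<in> (tree_adj (F' - {{a,b}}))\<^sup>* \<longleftrightarrow> (a,l) \<in> (tree_adj (F - {{a,b}}))\<^sup>*"
  proof
    assume "(a,l) \<in> (tree_adj (F' - {{a,b}}))\<^sup>*"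
    then show "(a,l) \<in> (tree_adj (F - {{a,b}}))\<^sup>*" by (rule adj_mono[rotated]) (auto simp: F'_def)
  next
    assume al: "(a,l) \<in> (tree_adj (F - {{a,b}}))\<^sup>*"
    have "a \<in> N'" using utree_edge[OF ut' ab] by simp
    from T1[OF conn[OF this l] ab]
    have "(a,l) \<in> (tree_adj (F' - {{a,b}}))\<^sup>* \<or> (b,l) \<in> (tree_adj (F' - {{a,b}}))\<^sup>*" .
    moreover have "(b,l) \<in> (tree_adj (F' - {{a,b}}))\<^sup>* \<Longrightarrow> False"
    proof -
      assume "(b,l) \<in> (tree_adj (F' - {{a,b}}))\<^sup>*"
      then have "(b,l) \<in> (tree_adj (F - {{a,b}}))\<^sup>*" by (rule adj_mono[rotated]) (auto simp: F'_def)
      then show False using sides_disj[OF u _ al] ab unfolding F'_def by auto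
    qed
    ultimately show "(a,l) \<in> (tree_adj (F' - {{a,b}}))\<^sup>*" by blast
  qed
qed

lemma prune:
  assumes "utree N F" "\<forall>x\<in>N. tdegree F x \<le> 3" "L \<subseteq> tleaves N F" "L \<noteq> {}"
  shows "\<exists>N' F'. utree N' F' \<and> (\<forall>x\<in>N'. tdegree F' x \<le> 3) \<and> tleaves N' F' = L \<and> F' \<subseteq> F
     \<and> (\<forall>a b. {a,b} \<in> F' \<longrightarrow> side_leaves N' F' a b = side_leaves N F a b \<inter> L)"
  using assms
proof (induction "card N" arbitrary: N F rule: less_induct)
  case less
  note u = less.prems(1)
  show ?case
  proof (cases "tleaves N F = L")
    case True
    then show ?thesis using less.prems unfolding side_leaves_def by blast
  next
    case False
    then obtain w where w: "w \<in> tleaves N F" "w \<notin> L" using less.prems(3) by blast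
    obtain v where v: "v \<in> L" using less.prems(4) by blast
    have wN: "w \<in> N" "tdegree F w \<le> 1" using w unfolding tleaves_def by auto
    have vN: "v \<in> N" "v \<noteq> w" using v w less.prems(3) unfolding tleaves_def by auto
    define N1 where "N1 = N - {w}"
    define F1 where "F1 = {e\<in>F. w \<notin> e}"
    have u1: "utree N1 F1" using remove_leaf(1)[OF u wN vN] unfolding N1_def F1_def .
    have side1: "\<And>a b l. {a,b} \<in> F1 \<Longrightarrow> l \<in> N1 \<Longrightarrow>
        (a,l) \<in> (tree_adj (F1 - {{a,b}}))\<^sup>* \<longleftrightarrow> (a,l) \<in> (tree_adj (F - {{a,b}}))\<^sup>*"
      using remove_leaf(2)[OF u wN vN] unfolding N1_def F1_def by blast
    have finF: "finite F" using utree_finF[OF u] .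
    have F1F: "F1 \<subseteq> F" unfolding F1_def by auto
    have deg1: "tdegree F1 x \<le> tdegree F x" for x using tdegree_mono[OF F1F finF] .
    have L1: "L \<subseteq> tleaves N1 F1"
      using less.prems(3) w(2) deg1 unfolding tleaves_def N1_def by (auto intro: order_trans)
    have d1: "\<forall>x\<in>N1. tdegree F1 x \<le> 3" using less.prems(2) deg1 unfolding N1_def by (auto intro: order_trans)
    have "card N1 < card N" unfolding N1_def using wN(1) utreeD(1)[OF u] by (metis card_Diff1_less)
    from less.hyps[OF this u1 d1 L1 less.prems(4)] obtain N' F' where
      IH: "utree N' F'" "\<forall>x\<in>N'. tdegree F' x \<le> 3" "tleaves N' F' = L" "F' \<subseteq> F1"
      "\<forall>a b. {a,b} \<in> F' \<longrightarrow> side_leaves N' F' a b = side_leaves N1 F1 a b \<inter> L" by blast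
    have "side_leaves N' F' a b = side_leaves N F a b \<inter> L" if ab: "{a,b} \<in> F'" for a b
    proof -
      have ab1: "{a,b} \<in> F1" using ab IH(4) by auto
      have "side_leaves N1 F1 a b \<inter> L = side_leaves N F a b \<inter> L"
        using side1[OF ab1] L1 less.prems(3) unfolding side_leaves_def tleaves_def by auto
      then show ?thesis using IH(5) ab by auto
    qed
    then show ?thesis using IH F1F by blast
  qed
qed




lemma proj_reach:
  assumes "(a,b) \<in> (tree_adj (insert {v,w} G))\<^sup>*" "\<forall>e\<in>G. w \<notin> e"
  shows "((if a = w then v else a), (if b = w then v else b)) \<in> (tree_adj G)\<^sup>*"
  using assms(1)
proof (induction rule: rtrancl_induct)
  case base then show ?case by simp
next
  case (step s t)
  then have "{s,t} = {v,w} \<or> {s,t} \<in> G" by (auto simp: tree_adj_def)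
  then show ?case
  proof
    assume "{s,t} = {v,w}"
    then have "s \<in> {v,w}" "t \<in> {v,w}" by (metis insertI1, metis insertI1 insert_commute)
    then show ?thesis using step(3) by auto
  next
    assume G: "{s,t} \<in> G"
    then have "s \<noteq> w" "t \<noteq> w" using assms(2) by auto
    then have "(s,t) \<in> tree_adj G" using G by (simp add: tree_adj_def)
    then show ?thesis using step(3) \<open>s \<noteq> w\<close> \<open>t \<noteq> w\<close> by (simp add: rtrancl_into_rtrancl)
  qed
qed

lemma pendant:
  assumes u: "utree N F" and v: "v \<in> N" and w: "w \<notin> N"
  shows "utree (insert w N) (insert {v,w} F)"
    "\<And>x. tdegree (insert {v,w} F) x = tdegree F x + (if x = v \<or> x = w then 1 else 0)"
proof -
  have finF: "finite F" using utree_finF[OF u] .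
  have wF: "\<forall>e\<in>F. w \<notin> e" using utreeD(3)[OF u] w by auto
  have vw: "{v,w} \<notin> F" using wF by auto
  have vnw: "v \<noteq> w" using v w by auto
  show "tdegree (insert {v,w} F) x = tdegree F x + (if x = v \<or> x = w then 1 else 0)" for x
  proof (cases "x = v \<or> x = w")
    case True
    then have "{e \<in> insert {v,w} F. x \<in> e} = insert {v,w} {e\<in>F. x\<in>e}" by auto
    then show ?thesis using True vw finF unfolding tdegree_def by simp
  next
    case False
    then have "{e \<in> insert {v,w} F. x \<in> e} = {e\<in>F. x\<in>e}" by auto
    then show ?thesis using False unfolding tdegree_def by simp
  qed
  let ?F = "insert {v,w} F" and ?N = "insert w N"
  have r: "(v,y) \<in> (tree_adj ?F)\<^sup>*" if "y \<in> ?N" for y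
  proof (cases "y = w")
    case True
    then show ?thesis by (simp add: tree_adj_def r_into_rtrancl)
  next
    case False
    then have "(v,y) \<in> (tree_adj F)\<^sup>*" using utreeD(4)[OF u v] that by auto
    then show ?thesis by (rule adj_mono[rotated]) auto
  qed
  have conn: "(x,y) \<in> (tree_adj ?F)\<^sup>*" if "x \<in> ?N" "y \<in> ?N" for x y
    using r[OF that(1)] r[OF that(2)] by (meson rtr_sym rtrancl_trans)
  have shape: "?F \<subseteq> {{a, b} | a b. a \<in> ?N \<and> b \<in> ?N \<and> a \<noteq> b}"
    using utreeD(3)[OF u] v vnw by blast
  have acyc: "(a, b) \<notin> (tree_adj (?F - {{a, b}}))\<^sup>*" if ab: "{a,b} \<in> ?F" for a b
  proof
    assume path: "(a, b) \<in> (tree_adj (?F - {{a, b}}))\<^sup>*"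
    show False
    proof (cases "{a,b} = {v,w}")
      case True
      then have eq: "?F - {{a,b}} = F" using vw by auto
      have "a \<noteq> b" using True vnw by (metis doubleton_eq_iff)
      have "a = w \<or> b = w" using True by (metis doubleton_eq_iff)
      then show False
      proof
        assume "a = w" then show False using isolated[of a b F] path[unfolded eq] wF \<open>a\<noteq>b\<close> by simp
      next
        assume "b = w" then show False using isolated[of b a F] rtr_sym[OF path[unfolded eq]] wF \<open>a\<noteq>b\<close> by simp
      qed
    next
      case False
      then have abF: "{a,b} \<in> F" using ab by auto
      have "?F - {{a,b}} = insert {v,w} (F - {{a,b}})" using False by auto
      from proj_reach[OF path[unfolded this]] wF
      have "((if a = w then v else a), (if b = w then v else b)) \<in> (tree_adj (F - {{a,b}}))\<^sup>*" by auto
      moreover have "a \<noteq> w" "b \<noteq> w" using abF wF by auto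
      ultimately show False using utreeD(5)[OF u abF] by simp
    qed
  qed
  show "utree ?N ?F" unfolding utree_def using utreeD(1)[OF u] shape conn acyc by auto
qed

lemma fresh_nat: "finite (N::nat set) \<Longrightarrow> \<exists>w. w \<notin> N"
  using ex_new_if_finite infinite_UNIV_nat by blast

lemma big_tree: "1 \<le> n \<Longrightarrow> \<exists>N F. utree N F \<and> (\<forall>x\<in>N. tdegree F x \<le> 3) \<and> n \<le> card (tleaves N F)"
proof (induction n rule: dec_induct)
  case base
  have "utree {0} {}" unfolding utree_def tree_adj_def by auto
  moreover have "tleaves {0} {} = {0}" unfolding tleaves_def tdegree_def by auto
  ultimately show ?case unfolding tdegree_def by (intro exI[of _ "{0}"] exI[of _ "{}"]) auto
next
  case (step n)
  then obtain N F where u: "utree N F" and d: "\<forall>x\<in>N. tdegree F x \<le> 3" and c: "n \<le> card (tleaves N F)" by blast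
  have finL: "finite (tleaves N F)" using utreeD(1)[OF u] unfolding tleaves_def by auto
  then obtain v where v: "v \<in> tleaves N F" using c step(1) by fastforce
  then have vN: "v \<in> N" and dv: "tdegree F v \<le> 1" unfolding tleaves_def by auto
  obtain w1 where w1: "w1 \<notin> N" using fresh_nat utreeD(1)[OF u] by blast
  obtain w2 where w2: "w2 \<notin> insert w1 N" using fresh_nat utreeD(1)[OF u] by (meson finite_insert)
  define N1 F1 N2 F2 where "N1 = insert w1 N" "F1 = insert {v,w1} F" "N2 = insert w2 N1" "F2 = insert {v,w2} F1"
  have u1: "utree N1 F1" and dg1: "\<And>x. tdegree F1 x = tdegree F x + (if x = v \<or> x = w1 then 1 else 0)"
    using pendant[OF u vN w1] unfolding N1_F1_N2_F2_def by auto
  have u2: "utree N2 F2" and dg2: "\<And>x. tdegree F2 x = tdegree F1 x + (if x = v \<or> x = w2 then 1 else 0)"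
    using pendant[OF u1 _ w2[folded N1_F1_N2_F2_def(1)]] vN unfolding N1_F1_N2_F2_def by auto
  have wF: "\<forall>e\<in>F. w1 \<notin> e \<and> w2 \<notin> e" using utreeD(3)[OF u] w1 w2 by auto
  have e12: "{e\<in>F. w1\<in>e} = {}" "{e\<in>F. w2\<in>e} = {}" using wF by auto
  have deg0: "tdegree F w1 = 0" "tdegree F w2 = 0" unfolding tdegree_def e12 by simp_all
  then have dgs: "tdegree F2 x = tdegree F x + (if x = v then 2 else 0) + (if x = w1 \<or> x = w2 then 1 else 0)" for x
    using dg1 dg2 w1 w2 vN by auto
  have d2: "\<forall>x\<in>N2. tdegree F2 x \<le> 3"
    using d dgs dv w1 w2 vN deg0 unfolding N1_F1_N2_F2_def(1,3) by auto
  have sub: "(tleaves N F - {v}) \<union> {w1,w2} \<subseteq> tleaves N2 F2"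
    using dgs w1 w2 vN deg0 unfolding tleaves_def N1_F1_N2_F2_def(1,3) by auto
  have fin2: "finite (tleaves N2 F2)" using utreeD(1)[OF u2] unfolding tleaves_def by auto
  have "card ((tleaves N F - {v}) \<union> {w1,w2}) = card (tleaves N F - {v}) + 2"
    using finL w1 w2 unfolding tleaves_def by (subst card_Un_disjoint) auto
  also have "\<dots> = card (tleaves N F) + 1" using finL v by (metis Suc_eq_plus1 add_2_eq_Suc' card_Diff1_less card_Suc_Diff1 less_nat_zero_code plus_1_eq_Suc)
  finally have "Suc n \<le> card ((tleaves N F - {v}) \<union> {w1,w2})" using c by simp
  also have "\<dots> \<le> card (tleaves N2 F2)" by (rule card_mono[OF fin2 sub])
  finally show ?case using u2 d2 by blast
qed

lemma decomp_exists:
  assumes "finite (snd D)" "snd D \<noteq> {}"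
  shows "\<exists>N F \<beta>. branch_decomp D N F \<beta>"
proof -
  have "1 \<le> card (snd D)" using assms by (simp add: Suc_leI card_gt_0_iff)
  from big_tree[OF this] obtain N F where u: "utree N F" and d: "\<forall>x\<in>N. tdegree F x \<le> 3"
    and c: "card (snd D) \<le> card (tleaves N F)" by blast
  obtain L where L: "L \<subseteq> tleaves N F" "card L = card (snd D)" using obtain_subset_with_card_n[OF c] by blast
  have finL: "finite L" using L assms by (metis card_gt_0_iff le_zero_eq not_less_eq_eq \<open>1 \<le> card (snd D)\<close> card.infinite)
  have Lne: "L \<noteq> {}" using L(2) assms by auto
  from prune[OF u d L(1) Lne] obtain N' F' where p: "utree N' F'" "\<forall>x\<in>N'. tdegree F' x \<le> 3" "tleaves N' F' = L" by blast
  obtain \<beta> where "bij_betw \<beta> L (snd D)" using finite_same_card_bij[OF finL assms(1) L(2)] by blast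
  then show ?thesis using p unfolding branch_decomp_def by auto
qed




definition emap :: "('a \<Rightarrow> 'b) \<Rightarrow> 'a \<times> 'a \<Rightarrow> 'b \<times> 'b" where
  "emap r = (\<lambda>(u, v). (r u, r v))"

lemma SV_map:
  assumes Y: "Y \<subseteq> E" and E0: "E0 \<subseteq> E"
    and C: "\<And>p q. p \<in> E0 \<Longrightarrow> q \<in> E0 \<Longrightarrow> r (snd p) = r (fst q) \<Longrightarrow> snd p = fst q \<or> (snd p, fst q) \<in> E"
  shows "SV (emap r ` E0) (emap r ` (Y \<inter> E0)) \<subseteq> r ` SV E Y"
proof
  fix v assume "v \<in> SV (emap r ` E0) (emap r ` (Y \<inter> E0))"
  then obtain a b where ab: "(a,v) \<in> emap r ` E0 - emap r ` (Y \<inter> E0)" "(v,b) \<in> emap r ` (Y \<inter> E0)"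
    unfolding SV_def by blast
  have a1: "(a,v) \<in> emap r ` E0" and a2: "(a,v) \<notin> emap r ` (Y \<inter> E0)" using ab(1) by simp_all
  from a1 obtain p where hp1: "p \<in> E0" and hp2: "(a,v) = emap r p" by (rule imageE)
  have hp3: "p \<notin> Y"
  proof
    assume "p \<in> Y"
    then have "emap r p \<in> emap r ` (Y \<inter> E0)" using hp1 by simp
    then show False using a2 hp2 by simp
  qed
  from ab(2) obtain q where hq1: "q \<in> Y \<inter> E0" and hq2: "(v,b) = emap r q" by (rule imageE)
  obtain p1 p2 where pp: "p = (p1,p2)" by (cases p)
  obtain q1 q2 where qq: "q = (q1,q2)" by (cases q)
  have rv: "r p2 = v" "r q1 = v" using hp2 hq2 pp qq by (simp_all add: emap_def)
  have pE: "(p1,p2) \<in> E - Y" using hp1 hp3 pp E0 by auto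
  have qY: "(q1,q2) \<in> Y" using hq1 qq by simp
  have q0: "q \<in> E0" using hq1 by simp
  have "r (snd p) = r (fst q)" using rv pp qq by simp
  from C[OF hp1 q0 this] have "p2 = q1 \<or> (p2,q1) \<in> E" using pp qq by simp
  then show "v \<in> r ` SV E Y"
  proof
    assume "p2 = q1"
    then have "p2 \<in> SV E Y" using pE qY unfolding SV_def by blast
    then show ?thesis using rv by (metis image_eqI)
  next
    assume e: "(p2,q1) \<in> E"
    show ?thesis
    proof (cases "(p2,q1) \<in> Y")
      case True
      then have "p2 \<in> SV E Y" using pE unfolding SV_def by blast
      then show ?thesis using rv by (metis image_eqI)
    next
      case False
      then have "q1 \<in> SV E Y" using e qY unfolding SV_def by blast
      then show ?thesis using rv by (metis image_eqI)
    qed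
  qed
qed

lemma SV_fin: "finite E \<Longrightarrow> finite (SV E X)"
proof -
  assume "finite E"
  moreover have "SV E X \<subseteq> snd ` E" unfolding SV_def by force
  ultimately show ?thesis by (meson finite_imageI rev_finite_subset)
qed

lemma width_map:
  assumes fin: "finite E" and X: "X \<subseteq> E" and E0: "E0 \<subseteq> E" and inj: "inj_on (emap r) E0"
    and C: "\<And>p q. p \<in> E0 \<Longrightarrow> q \<in> E0 \<Longrightarrow> r (snd p) = r (fst q) \<Longrightarrow> snd p = fst q \<or> (snd p, fst q) \<in> E"
  shows "dbw_width (emap r ` E0) (emap r ` (X \<inter> E0)) \<le> dbw_width E X"
proof -
  have eq: "emap r ` E0 - emap r ` (X \<inter> E0) = emap r ` ((E - X) \<inter> E0)"
  proof -
    have "emap r ` (E0 - X \<inter> E0) = emap r ` E0 - emap r ` (X \<inter> E0)"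
      by (rule inj_on_image_set_diff[OF inj]) auto
    moreover have "E0 - X \<inter> E0 = (E - X) \<inter> E0" using E0 by auto
    ultimately show ?thesis by simp
  qed
  have s1: "SV (emap r ` E0) (emap r ` (X \<inter> E0)) \<subseteq> r ` SV E X" by (rule SV_map[OF X E0 C])
  have s2: "SV (emap r ` E0) (emap r ` ((E - X) \<inter> E0)) \<subseteq> r ` SV E (E - X)" by (rule SV_map[OF _ E0 C]) auto
  have "SV (emap r ` E0) (emap r ` (X \<inter> E0)) \<union> SV (emap r ` E0) (emap r ` E0 - emap r ` (X \<inter> E0))
        \<subseteq> r ` (SV E X \<union> SV E (E - X))" using s1 s2 eq by auto
  moreover have "finite (SV E X \<union> SV E (E - X))" using SV_fin[OF fin] by auto
  ultimately have "card (SV (emap r ` E0) (emap r ` (X \<inter> E0)) \<union> SV (emap r ` E0) (emap r ` E0 - emap r ` (X \<inter> E0)))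
       \<le> card (SV E X \<union> SV E (E - X))"
    by (meson card_image_le card_mono finite_imageI order_trans)
  then show ?thesis unfolding dbw_width_def .
qed

lemma fin_pairs: "finite F \<Longrightarrow> (\<forall>e\<in>F. finite e) \<Longrightarrow> finite {g a b | a b. {a, b} \<in> F}"
proof -
  assume f: "finite F" "\<forall>e\<in>F. finite e"
  have "{g a b | a b. {a, b} \<in> F} \<subseteq> (\<lambda>(a,b). g a b) ` (\<Union>F \<times> \<Union>F)" by force
  moreover have "finite (\<Union>F \<times> \<Union>F)" using f by auto
  ultimately show ?thesis by (meson finite_imageI rev_finite_subset)
qed

lemma utree_fin_elems: assumes u: "utree N F" shows "\<forall>e\<in>F. finite e"
proof
  fix e assume e: "e \<in> F"
  have "e \<in> {{u, v} | u v. u \<in> N \<and> v \<in> N \<and> u \<noteq> v}" using utreeD(3)[OF u] e by (rule subsetD)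
  then show "finite e" by auto
qed

lemma transfer:
  fixes D :: "'a digraph" and H :: "'b digraph"
  assumes fin: "finite (snd D)" and E0: "E0 \<subseteq> snd D" and img: "snd H = emap r ` E0"
    and inj: "inj_on (emap r) E0"
    and C: "\<And>p q. p \<in> E0 \<Longrightarrow> q \<in> E0 \<Longrightarrow> r (snd p) = r (fst q) \<Longrightarrow> snd p = fst q \<or> (snd p, fst q) \<in> snd D"
  shows "dbw H \<le> dbw D"
proof (cases "snd H = {}")
  case True
  then show ?thesis unfolding dbw_def by simp
next
  case False
  then have E0ne: "E0 \<noteq> {}" using img by auto
  then have Dne: "snd D \<noteq> {}" using E0 by auto
  define S where "S = {decomp_width D N F \<beta> | N F \<beta>. branch_decomp D N F \<beta>}"
  have "S \<noteq> {}" using decomp_exists[OF fin Dne] unfolding S_def by blast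
  then have "Inf S \<in> S" by (rule Inf_nat_def1)
  then obtain N F \<beta> where bd: "branch_decomp D N F \<beta>" and dD0: "Inf S = decomp_width D N F \<beta>"
    unfolding S_def by blast
  have "dbw D = Inf S" unfolding dbw_def S_def using Dne by simp
  then have dD: "dbw D = decomp_width D N F \<beta>" using dD0 by simp
  have u: "utree N F" and deg: "\<forall>x\<in>N. tdegree F x \<le> 3" and bij: "bij_betw \<beta> (tleaves N F) (snd D)"
    using bd unfolding branch_decomp_def by auto
  define L where "L = {l \<in> tleaves N F. \<beta> l \<in> E0}"
  have bL: "\<beta> ` L = E0"
  proof
    show "\<beta> ` L \<subseteq> E0" unfolding L_def by blast
    show "E0 \<subseteq> \<beta> ` L"
    proof
      fix x assume x: "x \<in> E0"
      then have "x \<in> \<beta> ` tleaves N F" using E0 bij unfolding bij_betw_def by blast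
      then obtain l where "l \<in> tleaves N F" "x = \<beta> l" by blast
      then show "x \<in> \<beta> ` L" using x unfolding L_def by blast
    qed
  qed
  have Lne: "L \<noteq> {}" using bL E0ne by auto
  have LT: "L \<subseteq> tleaves N F" unfolding L_def by blast
  from prune[OF u deg LT Lne] obtain N' F' where p: "utree N' F'" "\<forall>x\<in>N'. tdegree F' x \<le> 3" "tleaves N' F' = L" "F' \<subseteq> F"
     "\<forall>a b. {a,b} \<in> F' \<longrightarrow> side_leaves N' F' a b = side_leaves N F a b \<inter> L"
    by blast
  have "inj_on \<beta> (tleaves N F)" using bij unfolding bij_betw_def by blast
  then have "inj_on \<beta> L" using LT by (rule inj_on_subset)
  then have bijL: "bij_betw \<beta> L E0" using bL unfolding bij_betw_def by blast
  have bijr: "bij_betw (emap r) E0 (snd H)" using inj img unfolding bij_betw_def by auto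
  have bd': "branch_decomp H N' F' (emap r \<circ> \<beta>)" unfolding branch_decomp_def
    using p(1,2,3) bij_betw_trans[OF bijL bijr] by simp
  have finF: "finite F" using utree_finF[OF u] .
  have finF': "finite F'" using utree_finF[OF p(1)] .
  let ?SD = "{dbw_width (snd D) (\<beta> ` side_leaves N F a b) | a b. {a, b} \<in> F}"
  have finSD: "finite ?SD" by (rule fin_pairs[OF finF utree_fin_elems[OF u]])
  have le: "dbw_width (snd H) ((emap r \<circ> \<beta>) ` side_leaves N' F' a b) \<le> decomp_width D N F \<beta>"
    if ab: "{a,b} \<in> F'" for a b
  proof -
    have sl: "side_leaves N' F' a b = side_leaves N F a b \<inter> L" using p(5) ab by auto
    have "\<beta> ` (side_leaves N F a b \<inter> L) = \<beta> ` side_leaves N F a b \<inter> E0"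
      unfolding L_def side_leaves_def by auto
    then have imgeq: "(emap r \<circ> \<beta>) ` side_leaves N' F' a b = emap r ` (\<beta> ` side_leaves N F a b \<inter> E0)"
      unfolding sl by (metis image_comp)
    have X: "\<beta> ` side_leaves N F a b \<subseteq> snd D" using bij unfolding bij_betw_def side_leaves_def tleaves_def by blast
    have W: "dbw_width (emap r ` E0) (emap r ` (\<beta> ` side_leaves N F a b \<inter> E0)) \<le> dbw_width (snd D) (\<beta> ` side_leaves N F a b)"
      by (rule width_map[OF fin X E0 inj C])
    have "dbw_width (snd H) ((emap r \<circ> \<beta>) ` side_leaves N' F' a b) \<le> dbw_width (snd D) (\<beta> ` side_leaves N F a b)"
      using W unfolding img[symmetric] imgeq .
    also have "\<dots> \<le> Max ({0} \<union> ?SD)"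
    proof (rule Max_ge)
      show "finite ({0} \<union> ?SD)" using finSD by blast
      show "dbw_width (snd D) (\<beta> ` side_leaves N F a b) \<in> {0} \<union> ?SD" using ab p(4) by blast
    qed
    finally show ?thesis unfolding decomp_width_def .
  qed
  let ?SH = "{dbw_width (snd H) ((emap r \<circ> \<beta>) ` side_leaves N' F' a b) | a b. {a, b} \<in> F'}"
  have finSH: "finite ?SH" by (rule fin_pairs[OF finF' utree_fin_elems[OF p(1)]])
  have "Max ({0} \<union> ?SH) \<le> decomp_width D N F \<beta>"
  proof (rule Max.boundedI)
    show "finite ({0} \<union> ?SH)" using finSH by blast
    show "{0} \<union> ?SH \<noteq> {}" by blast
    fix x assume "x \<in> {0} \<union> ?SH"
    then have "x = 0 \<or> (\<exists>a b. x = dbw_width (snd H) ((emap r \<circ> \<beta>) ` side_leaves N' F' a b) \<and> {a, b} \<in> F')"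
      by blast
    then show "x \<le> decomp_width D N F \<beta>" using le by (metis zero_le)
  qed
  then have "decomp_width H N' F' (emap r \<circ> \<beta>) \<le> decomp_width D N F \<beta>"
    unfolding decomp_width_def[of H] .
  moreover have "dbw H \<le> decomp_width H N' F' (emap r \<circ> \<beta>)"
  proof -
    have mem: "decomp_width H N' F' (emap r \<circ> \<beta>) \<in> {decomp_width H N F \<beta> | N F \<beta>. branch_decomp H N F \<beta>}"
      using bd' by blast
    have "Inf {decomp_width H N F \<beta> | N F \<beta>. branch_decomp H N F \<beta>} \<le> decomp_width H N' F' (emap r \<circ> \<beta>)"
      by (rule cInf_lower[OF mem]) simp
    then show ?thesis unfolding dbw_def using False by simp
  qed
  ultimately show ?thesis using dD by simp
qed




lemma emap_id: "emap (\<lambda>x. x) p = p" by (cases p) (simp add: emap_def)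

lemma sub_case:
  assumes "subdigraph H D" "finite (snd D)"
  shows "dbw H \<le> dbw D"
proof (rule transfer[of D "snd H" H "\<lambda>x. x"])
  show "finite (snd D)" by fact
  show "snd H \<subseteq> snd D" using assms(1) unfolding subdigraph_def by blast
  show "snd H = emap (\<lambda>x. x) ` snd H" by (simp add: emap_id)
  show "inj_on (emap (\<lambda>x. x)) (snd H)" by (simp add: emap_id inj_on_def)
  show "snd p = fst q \<or> (snd p, fst q) \<in> snd D" if "(\<lambda>x. x) (snd p) = (\<lambda>x. x) (fst q)" for p q
    using that by simp
qed

lemma contr_case:
  fixes H :: "'a digraph"
  assumes fin: "finite (fst H)" and sub: "snd H \<subseteq> fst H \<times> fst H"
    and bf: "butterfly_edge H x y" and zf: "z \<notin> fst H - {x,y}"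
  shows "finite (fst (contract H x y z))"
    "snd (contract H x y z) \<subseteq> fst (contract H x y z) \<times> fst (contract H x y z)"
    "dbw (contract H x y z) \<le> dbw H"
proof -
  have xy: "(x,y) \<in> snd H" using bf by (simp add: butterfly_edge_def)
  have c1: "card (out_nbrs H x) = 1" "card (in_nbrs H y) = 1" using bf by (simp_all add: butterfly_edge_def)
  have "y \<in> out_nbrs H x" using xy by (simp add: out_nbrs_def)
  then have outx: "out_nbrs H x = {y}" using c1(1) by (metis card_1_singletonE singletonD)
  have "x \<in> in_nbrs H y" using xy by (simp add: in_nbrs_def)
  then have iny: "in_nbrs H y = {x}" using c1(2) by (metis card_1_singletonE singletonD)
  have O: "w = y" if "(x,w) \<in> snd H" for w
  proof -
    have "w \<in> out_nbrs H x" using that by (simp add: out_nbrs_def)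
    then show ?thesis using outx by simp
  qed
  have I: "u = x" if "(u,y) \<in> snd H" for u
  proof -
    have "u \<in> in_nbrs H y" using that by (simp add: in_nbrs_def)
    then show ?thesis using iny by simp
  qed
  define r where "r v = (if v = x \<or> v = y then z else v)" for v
  define E0 where "E0 = snd H - {(x,y),(y,x)}"
  have tail: "u = y" if "(u,v) \<in> E0" "u = x \<or> u = y" for u v
  proof (rule ccontr)
    assume "u \<noteq> y"
    then have "u = x" using that(2) by simp
    then have "v = y" using O[of v] that(1) unfolding E0_def by blast
    then show False using that(1) \<open>u = x\<close> unfolding E0_def by simp
  qed
  have head: "v = x" if "(u,v) \<in> E0" "v = x \<or> v = y" for u v
  proof (rule ccontr)
    assume "v \<noteq> x"
    then have "v = y" using that(2) by simp
    then have "u = x" using I[of u] that(1) unfolding E0_def by blast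
    then show False using that(1) \<open>v = y\<close> unfolding E0_def by simp
  qed
  have vert: "u \<in> fst H" "v \<in> fst H" if "(u,v) \<in> E0" for u v
    using that sub unfolding E0_def by auto
  have rid: "r u = u" if "u \<noteq> x" "u \<noteq> y" for u using that unfolding r_def by simp
  have rxy: "r u = z" if "u = x \<or> u = y" for u using that unfolding r_def by auto
  have nz: "u \<noteq> z" if "u \<in> fst H" "u \<noteq> x" "u \<noteq> y" for u using that zf by auto
  have key: "a = b \<or> ((a = x \<or> a = y) \<and> (b = x \<or> b = y))" if "a \<in> fst H" "b \<in> fst H" "r a = r b" for a b
  proof (cases "a = x \<or> a = y")
    case True
    then have "r b = z" using that(3) rxy by simp
    then have "b = x \<or> b = y" using nz[OF that(2)] rid by metis
    then show ?thesis using True by simp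
  next
    case False
    then have "r a = a" using rid by simp
    moreover have "a \<noteq> z" using nz[OF that(1)] False by simp
    ultimately have "\<not> (b = x \<or> b = y)" using that(3) rxy by metis
    then show ?thesis using that(3) rid False by simp
  qed
  have E0H: "E0 \<subseteq> snd H" unfolding E0_def by blast
  have img: "snd (contract H x y z) = emap r ` E0"
  proof
    show "snd (contract H x y z) \<subseteq> emap r ` E0"
    proof
      fix t assume "t \<in> snd (contract H x y z)"
      then consider (a) u v where "t = (u,v)" "(u,v) \<in> snd H" "u \<notin> {x,y}" "v \<notin> {x,y}"
        | (b) u where "t = (u,z)" "u \<in> (in_nbrs H x \<union> in_nbrs H y) - {x,y}"
        | (c) w where "t = (z,w)" "w \<in> (out_nbrs H x \<union> out_nbrs H y) - {x,y}"
        unfolding contract_def by auto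
      then show "t \<in> emap r ` E0"
      proof cases
        case (a u v)
        then have "(u,v) \<in> E0" unfolding E0_def by auto
        moreover have "emap r (u,v) = t" using a rid by (simp add: emap_def)
        ultimately show ?thesis by (metis image_eqI)
      next
        case (b u)
        then have "(u,x) \<in> snd H" using I unfolding in_nbrs_def by auto
        then have "(u,x) \<in> E0" using b unfolding E0_def by auto
        moreover have "emap r (u,x) = t" using b rid rxy by (simp add: emap_def)
        ultimately show ?thesis by (metis image_eqI)
      next
        case (c w)
        then have "(y,w) \<in> snd H" using O unfolding out_nbrs_def by auto
        then have "(y,w) \<in> E0" using c unfolding E0_def by auto
        moreover have "emap r (y,w) = t" using c rid rxy by (simp add: emap_def)
        ultimately show ?thesis by (metis image_eqI)
      qed
    qed
  next
    show "emap r ` E0 \<subseteq> snd (contract H x y z)"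
    proof
      fix t assume "t \<in> emap r ` E0"
      then obtain u v where uv: "(u,v) \<in> E0" "t = emap r (u,v)" by auto
      have uvH: "(u,v) \<in> snd H" using uv E0H by auto
      show "t \<in> snd (contract H x y z)"
      proof (cases "u = x \<or> u = y")
        case True
        then have "u = y" using tail uv by blast
        have "\<not> (v = x \<or> v = y)"
        proof
          assume "v = x \<or> v = y"
          then have "v = x" using head uv by blast
          then show False using uv \<open>u = y\<close> unfolding E0_def by simp
        qed
        then have "t = (z,v)" using uv rid rxy True by (simp add: emap_def)
        moreover have "v \<in> (out_nbrs H x \<union> out_nbrs H y) - {x,y}"
          using uvH \<open>u = y\<close> \<open>\<not> (v = x \<or> v = y)\<close> unfolding out_nbrs_def by auto
        ultimately show ?thesis unfolding contract_def by auto
      next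
        case False
        show ?thesis
        proof (cases "v = x \<or> v = y")
          case True
          then have "v = x" using head uv by blast
          then have "t = (u,z)" using uv rid rxy False True by (simp add: emap_def)
          moreover have "u \<in> (in_nbrs H x \<union> in_nbrs H y) - {x,y}"
            using uvH \<open>v = x\<close> False unfolding in_nbrs_def by auto
          ultimately show ?thesis unfolding contract_def by auto
        next
          case F2: False
          then have "t = (u,v)" using uv rid False by (simp add: emap_def)
          then show ?thesis using uvH False F2 unfolding contract_def by auto
        qed
      qed
    qed
  qed
  have inj: "inj_on (emap r) E0"
  proof (rule inj_onI)
    fix p q assume p: "p \<in> E0" and q: "q \<in> E0" and eq: "emap r p = emap r q"
    obtain p1 p2 where pp: "p = (p1,p2)" by (cases p)
    obtain q1 q2 where qq: "q = (q1,q2)" by (cases q)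
    have e1: "r p1 = r q1" and e2: "r p2 = r q2" using eq pp qq by (simp_all add: emap_def)
    have "p1 = q1"
    proof -
      from key[OF vert(1)[OF p[unfolded pp]] vert(1)[OF q[unfolded qq]] e1]
      show ?thesis using tail p q pp qq by metis
    qed
    moreover have "p2 = q2"
    proof -
      from key[OF vert(2)[OF p[unfolded pp]] vert(2)[OF q[unfolded qq]] e2]
      show ?thesis using head p q pp qq by metis
    qed
    ultimately show "p = q" using pp qq by simp
  qed
  have C: "snd p = fst q \<or> (snd p, fst q) \<in> snd H" if p: "p \<in> E0" and q: "q \<in> E0" and e: "r (snd p) = r (fst q)" for p q
  proof -
    obtain p1 p2 where pp: "p = (p1,p2)" by (cases p)
    obtain q1 q2 where qq: "q = (q1,q2)" by (cases q)
    from key[OF vert(2)[OF p[unfolded pp]] vert(1)[OF q[unfolded qq]]] e pp qq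
    have "p2 = q1 \<or> ((p2 = x \<or> p2 = y) \<and> (q1 = x \<or> q1 = y))" by simp
    then show ?thesis
    proof
      assume "p2 = q1" then show ?thesis using pp qq by simp
    next
      assume h: "(p2 = x \<or> p2 = y) \<and> (q1 = x \<or> q1 = y)"
      have "p2 = x" using head[OF p[unfolded pp]] h by blast
      moreover have "q1 = y" using tail[OF q[unfolded qq]] h by blast
      ultimately show ?thesis using xy pp qq by simp
    qed
  qed
  have finE: "finite (snd H)" using fin sub by (meson finite_SigmaI rev_finite_subset)
  show "dbw (contract H x y z) \<le> dbw H" by (rule transfer[OF finE E0H img inj C])
  show "finite (fst (contract H x y z))" using fin unfolding contract_def by simp
  show "snd (contract H x y z) \<subseteq> fst (contract H x y z) \<times> fst (contract H x y z)"
  proof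
    fix t assume "t \<in> snd (contract H x y z)"
    then obtain u v where uv: "(u,v) \<in> E0" "t = emap r (u,v)" using img by auto
    have "r u \<in> fst (contract H x y z)" "r v \<in> fst (contract H x y z)"
      using vert[OF uv(1)] unfolding contract_def r_def by auto
    then show "t \<in> fst (contract H x y z) \<times> fst (contract H x y z)" using uv(2) by (simp add: emap_def)
  qed
qed

lemma bminor_dbw:
  assumes "bminor_seq H D" "digraph D"
  shows "finite (fst H) \<and> snd H \<subseteq> fst H \<times> fst H \<and> dbw H \<le> dbw D"
  using assms
proof (induction rule: bminor_seq.induct)
  case (sub H D)
  have fD: "finite (fst D)" "snd D \<subseteq> fst D \<times> fst D" using sub.prems unfolding digraph_def by auto
  then have "finite (snd D)" by (meson finite_SigmaI rev_finite_subset)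
  then have "dbw H \<le> dbw D" using sub_case[OF sub.hyps] by simp
  moreover have "finite (fst H)" using fD(1) sub.hyps unfolding subdigraph_def by (meson rev_finite_subset)
  ultimately show ?case using sub.hyps unfolding subdigraph_def by simp
next
  case (contr H D x y z)
  then have ih: "finite (fst H)" "snd H \<subseteq> fst H \<times> fst H" "dbw H \<le> dbw D" by auto
  note cc = contr_case[OF ih(1,2) contr.hyps(2,3)]
  show ?case using cc ih(3) by simp
qed

theorem mainTheorem13:
  fixes D :: "'a digraph" and H :: "'b digraph"
  assumes "digraph D"
    and "butterfly_minor H D"
  shows "dbw H \<le> dbw D"
proof -
  obtain D' where D': "bminor_seq D' D" "digraph_iso D' H" using assms(2) unfolding butterfly_minor_def by blast
  have inv: "finite (fst D')" "snd D' \<subseteq> fst D' \<times> fst D'" "dbw D' \<le> dbw D"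
    using bminor_dbw[OF D'(1) assms(1)] by auto
  obtain f where f: "bij_betw f (fst D') (fst H)" "snd H = (\<lambda>(u, v). (f u, f v)) ` snd D'"
    using D'(2) unfolding digraph_iso_def by blast
  have injf: "inj_on f (fst D')" using f(1) unfolding bij_betw_def by blast
  have finE: "finite (snd D')" using inv(1,2) by (meson finite_SigmaI rev_finite_subset)
  have img: "snd H = emap f ` snd D'" using f(2) unfolding emap_def .
  have inj: "inj_on (emap f) (snd D')"
  proof (rule inj_onI)
    fix p q assume p: "p \<in> snd D'" and q: "q \<in> snd D'" and eq: "emap f p = emap f q"
    obtain p1 p2 where pp: "p = (p1,p2)" by (cases p)
    obtain q1 q2 where qq: "q = (q1,q2)" by (cases q)
    have e1: "f p1 = f q1" and e2: "f p2 = f q2" using eq pp qq by (simp_all add: emap_def)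
    have v: "p1 \<in> fst D'" "p2 \<in> fst D'" "q1 \<in> fst D'" "q2 \<in> fst D'" using p q pp qq inv(2) by auto
    have "p1 = q1" using injf e1 v(1,3) by (simp add: inj_on_def)
    moreover have "p2 = q2" using injf e2 v(2,4) by (simp add: inj_on_def)
    ultimately show "p = q" using pp qq by simp
  qed
  have C: "snd p = fst q \<or> (snd p, fst q) \<in> snd D'" if p: "p \<in> snd D'" and q: "q \<in> snd D'" and e: "f (snd p) = f (fst q)" for p q
  proof -
    have "snd p \<in> fst D'" "fst q \<in> fst D'" using p q inv(2) by auto
    then show ?thesis using injf e by (simp add: inj_on_def)
  qed
  have "dbw H \<le> dbw D'" by (rule transfer[OF finE subset_refl img inj C])
  then show ?thesis using inv(3) by simp
qed


end
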